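(* Let $k>1$ be a square-free natural number and let $\mathfrak{n}^{\mathbb{Q}}_k$ be the rational Lie algebra with basis $X_1,X_2,X_3,X_4,Z_1,Z_2$ and nonzero brackets (up to antisymmetry) $[X_1,X_3]=Z_1$, $[X_1,X_4]=Z_2$, $[X_2,X_3]=kZ_2$, $[X_2,X_4]=Z_1$. Then there exists an Anosov automorphism $f$ of $\mathfrak{n}^{\mathbb{Q}}_k$ with signature $\{2,4\}$.
   Context: An automorphism of a rational Lie algebra is Anosov if it is hyperbolic (no eigenvalue of absolute value $1$) and integer-like (characteristic polynomial with integer coefficients and determinant $\pm1$). The signature of such an automorphism is the set $\{p,q\}$ where $p$ is the number of eigenvalues (with multiplicity) of absolute value $<1$ and $q$ the number of absolute value $>1$. *)

theory Defs
  imports Complex_Main "Jordan_Normal_Form.Char_Poly" "HOL-Computational_Algebra.Squarefree"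
begin

text \<open>The rational Lie algebra n_k^Q, realised on rat vectors of dimension 6 with respect to the
 basis X1,X2,X3,X4,Z1,Z2 (indices 0,...,5).\<close>

definition nk_struct :: "nat \<Rightarrow> nat \<Rightarrow> nat \<Rightarrow> nat \<Rightarrow> rat" where
  "nk_struct k i j l =
     (if (i, j, l) = (0, 2, 4) then 1 else if (i, j, l) = (2, 0, 4) then -1
      else if (i, j, l) = (0, 3, 5) then 1 else if (i, j, l) = (3, 0, 5) then -1
      else if (i, j, l) = (1, 2, 5) then of_nat k else if (i, j, l) = (2, 1, 5) then - of_nat k
      else if (i, j, l) = (1, 3, 4) then 1 else if (i, j, l) = (3, 1, 4) then -1
      else 0)"

definition nk_bracket :: "nat \<Rightarrow> rat vec \<Rightarrow> rat vec \<Rightarrow> rat vec" where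
  "nk_bracket k x y = vec 6 (\<lambda>l. \<Sum>i<6. \<Sum>j<6. x $ i * y $ j * nk_struct k i j l)"

definition nk_automorphism :: "nat \<Rightarrow> rat mat \<Rightarrow> bool" where
  "nk_automorphism k A \<longleftrightarrow> A \<in> carrier_mat 6 6 \<and> det A \<noteq> 0 \<and>
     (\<forall>x \<in> carrier_vec 6. \<forall>y \<in> carrier_vec 6.
        A *\<^sub>v nk_bracket k x y = nk_bracket k (A *\<^sub>v x) (A *\<^sub>v y))"

definition cmat :: "rat mat \<Rightarrow> complex mat" where
  "cmat A = map_mat of_rat A"

definition hyperbolic :: "rat mat \<Rightarrow> bool" where
  "hyperbolic A \<longleftrightarrow> (\<forall>z. eigenvalue (cmat A) z \<longrightarrow> cmod z \<noteq> 1)"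

definition integer_like :: "rat mat \<Rightarrow> bool" where
  "integer_like A \<longleftrightarrow> (\<forall>i. coeff (char_poly A) i \<in> \<int>) \<and> (det A = 1 \<or> det A = -1)"

definition anosov :: "rat mat \<Rightarrow> bool" where
  "anosov A \<longleftrightarrow> hyperbolic A \<and> integer_like A"

definition num_eig_lt1 :: "rat mat \<Rightarrow> nat" where
  "num_eig_lt1 A = (\<Sum>z \<in> {z. eigenvalue (cmat A) z \<and> cmod z < 1}. order z (char_poly (cmat A)))"

definition num_eig_gt1 :: "rat mat \<Rightarrow> nat" where
  "num_eig_gt1 A = (\<Sum>z \<in> {z. eigenvalue (cmat A) z \<and> cmod z > 1}. order z (char_poly (cmat A)))"

definition signature :: "rat mat \<Rightarrow> nat set" where
  "signature A = {num_eig_lt1 A, num_eig_gt1 A}"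

end

theory Submission
  imports Defs "HOL-Analysis.Kronecker_Approximation_Theorem" "HOL-Computational_Algebra.Nth_Powers"
begin

lemma nonsq_int:
  fixes k :: nat and p q :: int
  assumes "k > 1" "squarefree k" "q \<noteq> 0"
  shows "p^2 \<noteq> int k * q^2"
proof
  assume h: "p^2 = int k * q^2"
  define p' where "p' = nat \<bar>p\<bar>"
  define q' where "q' = nat \<bar>q\<bar>"
  have "int (p'^2) = int (k * q'^2)"
    using h unfolding p'_def q'_def by (simp add: power2_eq_square abs_mult[symmetric])
  hence e: "p'^2 = k * q'^2" by (simp only: of_nat_eq_iff)
  have q0: "q'^2 \<noteq> 0" using assms(3) unfolding q'_def by simp
  have "is_nth_power 2 (k * q'^2)" using e by (metis is_nth_power_nth_power)
  hence "is_nth_power 2 k"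
    using is_nth_power_mult_cancel_right[of 2 "q'^2" k] q0 by auto
  then obtain y where y: "k = y^2" by (elim is_nth_powerE)
  hence "y^2 dvd k" by simp
  hence "y dvd 1" using squarefreeD[OF assms(2)] by blast
  hence "y = 1" by simp
  with y assms(1) show False by simp
qed

lemma pell_exists:
  fixes k :: nat
  assumes k1: "k > 1" and sf: "squarefree k"
  shows "\<exists>a b :: int. a > 0 \<and> b > 0 \<and> a^2 - int k * b^2 = 1"
proof -
  define s where "s = sqrt (real k)"
  have s1: "s > 1" using k1 unfolding s_def by simp
  have ss: "s * s = real k" unfolding s_def by simp
  define C where "C = 2 * s + 1"
  define S where "S = {(p::int, q::int). p > 0 \<and> q > 0 \<and> \<bar>real_of_int (p^2 - int k * q^2)\<bar> \<le> C}"
  have nz: "real_of_int q * s - real_of_int p \<noteq> 0" if "q > 0" for p q :: int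
  proof
    assume "real_of_int q * s - real_of_int p = 0"
    hence "real_of_int p = real_of_int q * s" by simp
    hence "real_of_int (p^2) = real_of_int (int k * q^2)"
      by (simp add: power2_eq_square ss algebra_simps)
    hence "p^2 = int k * q^2" by (simp only: of_int_eq_iff)
    with nonsq_int[OF k1 sf, of q p] that show False by simp
  qed
  have infS: "infinite S"
  proof
    assume finS: "finite S"
    define T where "T = insert 1 ((\<lambda>(p,q). \<bar>real_of_int q * s - real_of_int p\<bar>) ` S)"
    have finT: "finite T" using finS unfolding T_def by simp
    have Tpos: "\<forall>t\<in>T. t > 0" unfolding T_def S_def using nz by auto
    define \<delta> where "\<delta> = Min T"
    have \<delta>pos: "\<delta> > 0" unfolding \<delta>_def using finT Tpos by (simp add: T_def)
    obtain N :: nat where N: "N > 1 / \<delta>" using reals_Archimedean2 by blast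
    have Npos: "N > 0" using N \<delta>pos
      by (metis divide_pos_pos less_numeral_extra(1) of_nat_0 of_nat_less_iff gr0I order.asym)
    obtain h q where hq: "0 < q" "q \<le> int N" "\<bar>real_of_int q * s - real_of_int h\<bar> < 1 / N"
      using Dirichlet_approx[OF Npos, of s] by blast
    have "1 / real N < \<delta>" using N \<delta>pos Npos by (simp add: field_simps)
    have N1: "1 / real N \<le> 1" using Npos by simp
    have qs: "real_of_int q * s \<ge> s" using hq(1) s1 by simp
    have hlo: "real_of_int h > real_of_int q * s - 1" using hq(3) N1 by linarith
    have hhi: "real_of_int h < real_of_int q * s + 1" using hq(3) N1 by linarith
    have hpos: "h > 0" using hlo qs s1 by linarith
    have "\<bar>real_of_int (h^2 - int k * q^2)\<bar> = \<bar>real_of_int q * s - real_of_int h\<bar> * \<bar>real_of_int h + real_of_int q * s\<bar>"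
    proof -
      have "real_of_int (h^2 - int k * q^2) = (real_of_int h - real_of_int q * s) * (real_of_int h + real_of_int q * s)"
        by (simp add: power2_eq_square algebra_simps ss[symmetric])
      thus ?thesis by (simp add: abs_mult abs_minus_commute)
    qed
    also have "\<dots> \<le> (1 / N) * (2 * real_of_int q * s + 1)"
    proof (rule mult_mono)
      show "\<bar>real_of_int h + real_of_int q * s\<bar> \<le> 2 * real_of_int q * s + 1"
        using hpos hhi qs s1 by (simp add: abs_if mult.commute)
    qed (use hq(3) in auto)
    also have "\<dots> = 2 * s * (real_of_int q / N) + 1 / N" by (simp add: field_simps add_divide_distrib)
    also have "\<dots> \<le> 2 * s * 1 + 1"
    proof -
      have "real_of_int q / N \<le> 1" using hq(2) Npos by (simp add: field_simps)
      hence "2 * s * (real_of_int q / N) \<le> 2 * s * 1" using s1 by (intro mult_left_mono) auto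
      thus ?thesis using N1 by linarith
    qed
    finally have "(h, q) \<in> S" unfolding S_def C_def using hpos hq(1) by simp
    hence "\<bar>real_of_int q * s - real_of_int h\<bar> \<in> T" unfolding T_def by force
    hence "\<delta> \<le> \<bar>real_of_int q * s - real_of_int h\<bar>" unfolding \<delta>_def using finT by simp
    with hq(3) \<open>1 / real N < \<delta>\<close> show False by linarith
  qed
  define M where "M = \<lceil>C\<rceil>"
  define f where "f = (\<lambda>(p, q). (p^2 - int k * q^2, p mod (p^2 - int k * q^2), q mod (p^2 - int k * q^2)))"
  have modb: "\<bar>x mod n\<bar> \<le> \<bar>n\<bar>" if n0: "n \<noteq> 0" for x n :: int
  proof (cases "n > 0")
    case True
    then show ?thesis using pos_mod_bound[OF True, of x] pos_mod_sign[OF True, of x] by linarith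
  next
    case False
    show ?thesis
    proof (cases "n = 0")
      case False
      with \<open>\<not> n > 0\<close> have "n < 0" by simp
      then show ?thesis using neg_mod_bound[OF `n<0`, of x] neg_mod_sign[OF `n<0`, of x] by linarith
    qed (use n0 in simp)
  qed
  have "f ` S \<subseteq> {-M..M} \<times> {-M..M} \<times> {-M..M}"
  proof
    fix t assume "t \<in> f ` S"
    then obtain p q where pq: "(p,q) \<in> S" "t = f (p,q)" by auto
    let ?n = "p^2 - int k * q^2"
    have "\<bar>real_of_int ?n\<bar> \<le> C" using pq(1) unfolding S_def by simp
    hence "real_of_int \<bar>?n\<bar> \<le> C" by simp
    hence "\<lceil>real_of_int \<bar>?n\<bar>\<rceil> \<le> M" unfolding M_def by (rule ceiling_mono)
    hence "\<bar>?n\<bar> \<le> M" by (simp only: ceiling_of_int)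
    moreover have "?n \<noteq> 0" using nonsq_int[OF k1 sf, of q p] pq(1) unfolding S_def by auto
    moreover have "\<bar>p mod ?n\<bar> \<le> M" "\<bar>q mod ?n\<bar> \<le> M" using modb[of ?n p] modb[of ?n q] calculation by auto
    ultimately show "t \<in> {-M..M} \<times> {-M..M} \<times> {-M..M}" using pq(2) unfolding f_def by (auto simp: abs_le_iff)
  qed
  hence "finite (f ` S)" by (rule finite_subset) auto
  hence "\<not> inj_on f S" using infS finite_imageD by blast
  then obtain p1 q1 p2 q2 where P: "(p1,q1) \<in> S" "(p2,q2) \<in> S" "(p1,q1) \<noteq> (p2,q2)" "f (p1,q1) = f (p2,q2)"
    unfolding inj_on_def by auto
  define N where "N = p1^2 - int k * q1^2"
  have q1: "q1 > 0" "p1 > 0" and q2: "q2 > 0" "p2 > 0" using P(1,2) unfolding S_def by auto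
  have N2: "N = p2^2 - int k * q2^2" and m1: "p1 mod N = p2 mod N" and m2: "q1 mod N = q2 mod N"
    using P(4) unfolding f_def N_def by (auto simp: Let_def)
  have N0: "N \<noteq> 0" using nonsq_int[OF k1 sf, of q1 p1] q1 unfolding N_def by auto
  have d1: "N dvd p2 - p1" using m1 by (metis mod_eq_dvd_iff)
  have d2: "N dvd q2 - q1" using m2 by (metis mod_eq_dvd_iff)
  define X where "X = p1 * p2 - int k * q1 * q2"
  define Y where "Y = p1 * q2 - q1 * p2"
  have "X = N + p1 * (p2 - p1) - int k * q1 * (q2 - q1)" unfolding X_def N_def by (simp add: algebra_simps power2_eq_square)
  hence dX: "N dvd X" using d1 d2 by simp
  have "Y = p1 * (q2 - q1) - q1 * (p2 - p1)" unfolding Y_def by (simp add: algebra_simps)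
  hence dY: "N dvd Y" using d1 d2 by simp
  have XY: "X^2 - int k * Y^2 = N * N"
    unfolding X_def Y_def by (subst (2) N2) (simp add: N_def power2_eq_square algebra_simps)
  obtain x where x: "X = N * x" using dX by (auto elim: dvdE)
  obtain y where y: "Y = N * y" using dY by (auto elim: dvdE)
  have "N * N * (x^2 - int k * y^2) = N * N * 1" using XY x y by (simp add: power2_eq_square algebra_simps)
  hence xy: "x^2 - int k * y^2 = 1" using N0 by simp
  have y0: "y \<noteq> 0"
  proof
    assume "y = 0"
    hence Y0: "p1 * q2 = q1 * p2" using y unfolding Y_def by simp
    have "q2^2 * N = q1^2 * N"
    proof -
      have "q2^2 * N = (p1*q2)^2 - int k * q1^2 * q2^2" unfolding N_def by (simp add: power2_eq_square algebra_simps)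
      also have "\<dots> = (q1*p2)^2 - int k * q1^2 * q2^2" using Y0 by simp
      also have "\<dots> = q1^2 * N" by (subst N2) (simp add: power2_eq_square algebra_simps)
      finally show ?thesis .
    qed
    hence "q2^2 = q1^2" using N0 by simp
    hence "q2 = q1" using q1 q2 by (simp add: power2_eq_iff)
    hence "p1 = p2" using Y0 q1 by simp
    with \<open>q2 = q1\<close> P(3) show False by simp
  qed
  have "\<bar>x\<bar> > 0"
  proof -
    have "x^2 = 1 + int k * y^2" using xy by simp
    moreover have "int k * y^2 \<ge> 0" by simp
    ultimately have "x \<noteq> 0" by (intro notI) simp
    thus ?thesis by simp
  qed
  moreover have "\<bar>y\<bar> > 0" using y0 by simp
  moreover have "\<bar>x\<bar>^2 - int k * \<bar>y\<bar>^2 = 1" using xy by simp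
  ultimately show ?thesis by blast
qed

lemma det_mat_Suc:
  fixes f :: "nat \<times> nat \<Rightarrow> 'a :: comm_ring_1"
  shows "det (Matrix.mat (Suc n) (Suc n) f) =
    (\<Sum>j<Suc n. if f (0, j) = 0 then 0 else
        (-1)^j * f (0, j) * det (Matrix.mat n n (\<lambda>(i, j'). f (Suc i, if j' < j then j' else Suc j'))))"
proof -
  have "det (Matrix.mat (Suc n) (Suc n) f) = (\<Sum>j<Suc n. Matrix.mat (Suc n) (Suc n) f $$ (0, j) * cofactor (Matrix.mat (Suc n) (Suc n) f) 0 j)"
    by (rule laplace_expansion_row) auto
  also have "\<dots> = (\<Sum>j<Suc n. if f (0, j) = 0 then 0 else
        (-1)^j * f (0, j) * det (Matrix.mat n n (\<lambda>(i, j'). f (Suc i, if j' < j then j' else Suc j'))))"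
  proof (rule sum.cong[OF refl])
    fix j assume j: "j \<in> {..<Suc n}"
    have md: "mat_delete (Matrix.mat (Suc n) (Suc n) f) 0 j = Matrix.mat n n (\<lambda>(i, j'). f (Suc i, if j' < j then j' else Suc j'))"
      unfolding mat_delete_def by (rule eq_matI) auto
    show "Matrix.mat (Suc n) (Suc n) f $$ (0, j) * cofactor (Matrix.mat (Suc n) (Suc n) f) 0 j = (if f (0, j) = 0 then 0 else
        (-1)^j * f (0, j) * det (Matrix.mat n n (\<lambda>(i, j'). f (Suc i, if j' < j then j' else Suc j'))))"
      using j unfolding cofactor_def md by auto
  qed
  finally show ?thesis .
qed

lemma det_mat_0: "det (Matrix.mat 0 0 f) = 1" by simp

lemma det_mat_numeral:
  fixes f :: "nat \<times> nat \<Rightarrow> 'a :: comm_ring_1"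
  shows "det (Matrix.mat (numeral m) (numeral m) f) =
    (\<Sum>j<numeral m. if f (0, j) = 0 then 0 else
        (-1)^j * f (0, j) * det (Matrix.mat (pred_numeral m) (pred_numeral m) (\<lambda>(i, j'). f (Suc i, if j' < j then j' else Suc j'))))"
  by (simp only: numeral_eq_Suc det_mat_Suc)

lemma sum_lessThan_numeral: "(\<Sum>j<numeral m. f j) = (\<Sum>j<pred_numeral m. f j) + f (pred_numeral m)"
  by (simp only: numeral_eq_Suc sum.lessThan_Suc)

lemma det_mat_1: "det (Matrix.mat 1 1 f) = f (0, 0)"
  using det_mat_Suc[of 0 f] by simp

lemmas det_simps = det_mat_numeral det_mat_0 sum_lessThan_numeral det_mat_Suc det_mat_1

definition Mgen :: "'a::comm_ring_1 \<Rightarrow> 'a \<Rightarrow> 'a \<Rightarrow> 'a mat" where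
  "Mgen a b k = Matrix.mat 6 6 (\<lambda>(i,j). [[0,0,-(k*b),-a,0,0],[0,0,-a,-b,0,0],[0,1,a,-b,0,0],[1,0,-(k*b),a,0,0],[0,0,0,0,a,b],[0,0,0,0,k*b,a]] ! i ! j)"

lemma det_Mgen:
  fixes a b k :: "'a::idom"
  assumes "a \<noteq> 0" "b \<noteq> 0" "k \<noteq> 0"
  shows "det (Mgen a b k) = (a^2 - k*b^2)^2"
  unfolding Mgen_def
  using assms by (simp add: det_simps pred_numeral_simps) (simp add: algebra_simps power2_eq_square)

lemma char_poly_matrix_mat:
  "char_poly_matrix (Matrix.mat n n g) = Matrix.mat n n (\<lambda>(i,j). (if i = j then [:0,1:] else 0) + [:- g (i,j):])"
  unfolding char_poly_matrix_def by (rule eq_matI) auto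

definition Tgen :: "'a::comm_ring_1 \<Rightarrow> 'a \<Rightarrow> 'a \<Rightarrow> 'a poly" where
  "Tgen a b k = ([:a, -a, 1:]^2 - [:k*b^2:] * [:1,1:]^2) * ([:-a,1:]^2 - [:k*b^2:])"

lemma char_poly_Mgen:
  fixes a b k :: "'a::idom"
  assumes "a \<noteq> 0" "b \<noteq> 0" "k \<noteq> 0"
  shows "char_poly (Mgen a b k) = Tgen a b k"
  unfolding char_poly_def Mgen_def char_poly_matrix_mat Tgen_def
  using assms by (simp add: det_simps pred_numeral_simps) (simp add: algebra_simps power2_eq_square)

definition linprod :: "'a::idom list \<Rightarrow> 'a poly" where
  "linprod rs = prod_list (map (\<lambda>r. [:-r, 1:]) rs)"

lemma linprod_nz: "linprod rs \<noteq> 0"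
  unfolding linprod_def by (auto simp: prod_list_zero_iff)

lemma order_linprod: "order z (linprod rs) = count_list rs z"
proof (induction rs)
  case Nil
  then show ?case by (simp add: linprod_def order_0I)
next
  case (Cons r rs)
  have e: "linprod (r # rs) = [:-r, 1:] * linprod rs" by (simp add: linprod_def del: mult_pCons_left)
  have "[:-r, 1:] * linprod rs \<noteq> 0" using linprod_nz[of rs] by (simp del: mult_pCons_left)
  hence "order z ([:-r, 1:] * linprod rs) = order z [:-r, 1:] + order z (linprod rs)"
    by (rule order_mult)
  hence "order z (linprod (r # rs)) = order z [:-r, 1:] + order z (linprod rs)" by (simp only: e)
  also have "order z [:-r, 1:] = (if z = r then 1 else 0)"
    by (subst order_linear') auto
  finally show ?case using Cons by auto
qed

lemma poly_linprod: "poly (linprod rs) z = 0 \<longleftrightarrow> z \<in> set rs"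
  unfolding linprod_def by (induction rs) auto

lemma sum_count_list:
  assumes "finite A" "set rs \<subseteq> A"
  shows "(\<Sum>z\<in>{z \<in> A. R z}. count_list rs z) = length (filter R rs)"
  using assms(2)
proof (induction rs)
  case Nil
  then show ?case by simp
next
  case (Cons r rs)
  have fin: "finite {z \<in> A. R z}" using assms(1) by simp
  have c: "count_list (r # rs) z = count_list rs z + (if r = z then 1 else 0)" for z by simp
  have "(\<Sum>z\<in>{z \<in> A. R z}. count_list (r # rs) z) =
        (\<Sum>z\<in>{z \<in> A. R z}. count_list rs z) + (\<Sum>z\<in>{z \<in> A. R z}. if r = z then 1 else 0)"
    unfolding c by (rule sum.distrib)
  also have "(\<Sum>z\<in>{z \<in> A. R z}. if r = z then 1 else (0::nat)) = (if R r then 1 else 0)"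
    using Cons.prems fin by (simp add: sum.delta)
  finally show ?case using Cons by simp
qed

lemma quad_split:
  fixes x y t c :: "'a::comm_ring_1"
  assumes "x + y = t" "x * y = c"
  shows "[:c, -t, 1:] = [:-x, 1:] * [:-y, 1:]"
  using assms by (auto simp: algebra_simps)

lemma quart_split:
  fixes e s al kb :: "'a::field_char_0"
  assumes "e + s = 2 * al" "e * s = al^2 - kb"
  shows "[:al, -al, 1:]^2 - [:kb:] * [:1,1:]^2 = [:s, -e, 1:] * [:e, -s, 1:]"
proof -
  have al: "al = (e+s)/2" using assms(1) by simp
  have kb: "kb = ((e+s)/2)^2 - e * s" using assms(2) al by simp
  show ?thesis unfolding al kb by (simp add: power2_eq_square field_simps)
qed

lemma quad2_split:
  fixes e s al kb :: "'a::comm_ring_1"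
  assumes "e + s = 2 * al" "e * s = al^2 - kb"
  shows "[:-al, 1:]^2 - [:kb:] = [:-e, 1:] * [:-s, 1:]"
  using assms by (simp add: power2_eq_square algebra_simps)

lemma roots_setup:
  fixes a b :: int and k :: nat
  assumes k1: "k > 1" and a: "a > 0" and b: "b > 0" and pell: "a^2 - int k * b^2 = 1"
  shows "\<exists>rs::complex list. Tgen (of_int a) (of_int b) (of_nat k) = linprod rs \<and>
     length (filter (\<lambda>z. cmod z < 1) rs) = 2 \<and> length (filter (\<lambda>z. cmod z > 1) rs) = 4 \<and>
     (\<forall>z\<in>set rs. cmod z \<noteq> 1)"
proof -
  define s where "s = sqrt (real k)"
  have s1: "s > 1" using k1 unfolding s_def by simp
  have ss: "s * s = real k" unfolding s_def by simp
  have pellR: "real_of_int a ^ 2 - real k * real_of_int b ^ 2 = 1"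
  proof -
    have "real_of_int (a^2 - int k * b^2) = 1" using pell by simp
    thus ?thesis by simp
  qed
  define e where "e = real_of_int a + real_of_int b * s"
  define \<sigma> where "\<sigma> = real_of_int a - real_of_int b * s"
  have es: "e * \<sigma> = 1"
  proof -
    have "e * \<sigma> = real_of_int a ^ 2 - real_of_int b ^ 2 * (s * s)"
      unfolding e_def \<sigma>_def by (simp add: power2_eq_square algebra_simps)
    also have "\<dots> = 1" using pellR ss by (simp add: algebra_simps)
    finally show ?thesis .
  qed
  have a1: "real_of_int a \<ge> 1" using a by simp
  have b1: "real_of_int b \<ge> 1" using b by simp
  have bs: "real_of_int b * s \<ge> s" using b1 s1 by simp
  have e2: "e > 2" unfolding e_def using a1 bs s1 by linarith
  have \<sigma>e: "\<sigma> = 1 / e" using es e2 by (simp add: field_simps)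
  have \<sigma>pos: "\<sigma> > 0" unfolding \<sigma>e using e2 by simp
  have \<sigma>1: "\<sigma> < 1"
  proof -
    have "e * \<sigma> < e * 1" using es e2 by simp
    thus ?thesis using e2 by simp
  qed
  define D where "D = e^2 - 4 * \<sigma>"
  have e4: "e^2 > 4"
  proof -
    have "2 * 2 < e * e" using e2 by (intro mult_strict_mono) auto
    thus ?thesis by (simp add: power2_eq_square)
  qed
  have Dpos: "D > 0" unfolding D_def using e4 \<sigma>1 by linarith
  define q where "q = sqrt D"
  have q0: "q \<ge> 0" unfolding q_def using Dpos by simp
  have qq: "q * q = D" unfolding q_def using Dpos by (metis less_imp_le real_sqrt_pow2 power2_eq_square)
  have qe: "q < e"
  proof -
    have "D < e^2" unfolding D_def using \<sigma>pos by simp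
    hence "q < sqrt (e^2)" unfolding q_def using real_sqrt_less_iff by blast
    thus ?thesis using e2 by simp
  qed
  define m1 where "m1 = (e + q) / 2"
  define m2 where "m2 = (e - q) / 2"
  have m12s: "m1 + m2 = e" unfolding m1_def m2_def by (simp add: field_simps)
  have m12p: "m1 * m2 = \<sigma>"
  proof -
    have "m1 * m2 = (e*e - q*q) / 4" unfolding m1_def m2_def by (simp add: field_simps)
    also have "\<dots> = \<sigma>" unfolding qq D_def by (simp add: power2_eq_square)
    finally show ?thesis .
  qed
  have m1gt: "m1 > 1" unfolding m1_def using e2 q0 by simp
  have m2pos: "m2 > 0" unfolding m2_def using qe by simp
  have m2lt: "m2 < 1"
  proof (rule ccontr)
    assume "\<not> m2 < 1"
    hence "m1 * m2 \<ge> m1 * 1" using m1gt by (intro mult_left_mono) auto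
    thus False using m12p m1gt \<sigma>1 by simp
  qed
  define W where "W = 4 * e - \<sigma>^2"
  have "\<sigma>^2 < 1" using \<sigma>1 \<sigma>pos by (simp add: power_less_one_iff)
  hence Wpos: "W > 0" unfolding W_def using e2 by linarith
  define w where "w = sqrt W"
  have ww: "w * w = W" unfolding w_def using Wpos by (metis less_imp_le real_sqrt_pow2 power2_eq_square)
  define r1 where "r1 = Complex (\<sigma>/2) (w/2)"
  define r2 where "r2 = cnj r1"
  have r12s: "r1 + r2 = complex_of_real \<sigma>" unfolding r2_def r1_def by (simp add: complex_eq_iff)
  have nr: "Re r1 ^ 2 + Im r1 ^ 2 = e" unfolding r1_def W_def
    using ww unfolding W_def by (simp add: power2_eq_square field_simps)
  have r12p: "r1 * r2 = complex_of_real e" unfolding r2_def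
    using complex_mult_cnj[of r1] nr by simp
  have cr1: "cmod r1 = sqrt e" unfolding cmod_def using nr by simp
  have cr1g: "cmod r1 > 1" unfolding cr1 using e2 by simp
  have cr2g: "cmod r2 > 1" unfolding r2_def using cr1g by simp
  define rs where "rs = [complex_of_real m1, complex_of_real m2, r1, r2, complex_of_real e, complex_of_real \<sigma>]"
  let ?al = "of_int a :: complex"
  let ?kb = "of_nat k * (of_int b)^2 :: complex"
  have h1: "complex_of_real e + complex_of_real \<sigma> = 2 * ?al"
  proof -
    have "e + \<sigma> = 2 * real_of_int a" unfolding e_def \<sigma>_def by simp
    hence "complex_of_real (e + \<sigma>) = complex_of_real (2 * real_of_int a)" by simp
    thus ?thesis by simp
  qed
  have h2: "complex_of_real e * complex_of_real \<sigma> = ?al^2 - ?kb"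
  proof -
    have "complex_of_real e * complex_of_real \<sigma> = 1" using es by (metis of_real_1 of_real_mult)
    also have "1 = (of_int (a^2 - int k * b^2) :: complex)" using pell by simp
    also have "\<dots> = ?al^2 - ?kb" by simp
    finally show ?thesis .
  qed
  have T: "Tgen ?al (of_int b) (of_nat k) =
      ([:complex_of_real \<sigma>, - complex_of_real e, 1:] * [:complex_of_real e, - complex_of_real \<sigma>, 1:]) *
      ([:- complex_of_real e, 1:] * [:- complex_of_real \<sigma>, 1:])"
    unfolding Tgen_def using quart_split[OF h1 h2] quad2_split[OF h1 h2] by simp
  have Q1: "[:complex_of_real \<sigma>, - complex_of_real e, 1:] = [:- complex_of_real m1, 1:] * [:- complex_of_real m2, 1:]"
    by (rule quad_split) (use m12s m12p in \<open>simp_all flip: of_real_add of_real_mult\<close>)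
  have Q2: "[:complex_of_real e, - complex_of_real \<sigma>, 1:] = [:- r1, 1:] * [:- r2, 1:]"
    by (rule quad_split) (use r12s r12p in simp_all)
  have "Tgen ?al (of_int b) (of_nat k) = linprod rs"
    unfolding T Q1 Q2 rs_def linprod_def
    by (simp only: list.map prod_list.Cons prod_list.Nil mult_1_right mult.assoc)
  moreover have "length (filter (\<lambda>z. cmod z < 1) rs) = 2"
    unfolding rs_def using m1gt m2pos m2lt cr1g cr2g e2 \<sigma>pos \<sigma>1 by simp
  moreover have "length (filter (\<lambda>z. cmod z > 1) rs) = 4"
    unfolding rs_def using m1gt m2pos m2lt cr1g cr2g e2 \<sigma>pos \<sigma>1 by simp
  moreover have "\<forall>z\<in>set rs. cmod z \<noteq> 1"
    unfolding rs_def using m1gt m2pos m2lt cr1g cr2g e2 \<sigma>pos \<sigma>1 by auto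
  ultimately show ?thesis by blast
qed

lemma sum_atLeast0_numeral: "(\<Sum>j\<in>{0..<numeral m}. f j) = (\<Sum>j<pred_numeral m. f j) + f (pred_numeral m)"
  by (simp only: atLeast0LessThan sum_lessThan_numeral)

lemma aut_Mgen:
  fixes a b :: rat and k :: nat
  assumes x: "x \<in> carrier_vec 6" and y: "y \<in> carrier_vec 6"
  shows "Mgen a b (of_nat k) *\<^sub>v nk_bracket k x y = nk_bracket k (Mgen a b (of_nat k) *\<^sub>v x) (Mgen a b (of_nat k) *\<^sub>v y)"
proof (rule eq_vecI)
  show "dim_vec (Mgen a b (of_nat k) *\<^sub>v nk_bracket k x y) = dim_vec (nk_bracket k (Mgen a b (of_nat k) *\<^sub>v x) (Mgen a b (of_nat k) *\<^sub>v y))"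
    by (simp add: Mgen_def nk_bracket_def)
  fix i assume "i < dim_vec (nk_bracket k (Mgen a b (of_nat k) *\<^sub>v x) (Mgen a b (of_nat k) *\<^sub>v y))"
  hence i: "i < 6" by (simp add: nk_bracket_def)
  have dx: "dim_vec x = 6" and dy: "dim_vec y = 6" using x y by auto
  have "i = 0 \<or> i = 1 \<or> i = 2 \<or> i = 3 \<or> i = 4 \<or> i = 5" using i by auto
  then show "(Mgen a b (of_nat k) *\<^sub>v nk_bracket k x y) $ i = nk_bracket k (Mgen a b (of_nat k) *\<^sub>v x) (Mgen a b (of_nat k) *\<^sub>v y) $ i"
    by (elim disjE) (simp_all add: Mgen_def nk_bracket_def mult_mat_vec_def scalar_prod_def dx dy
        sum_atLeast0_numeral sum_lessThan_numeral pred_numeral_simps nk_struct_def algebra_simps)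
qed

lemma map_Mgen:
  assumes h0: "h 0 = 0" and h1: "h 1 = 1" and hm: "\<And>x. h (-x) = - h x" and hx: "\<And>x y. h (x*y) = h x * h y"
  shows "map_mat h (Mgen a b k) = Mgen (h a) (h b) (h k)"
proof (rule eq_matI)
  fix i j assume "i < dim_row (Mgen (h a) (h b) (h k))" "j < dim_col (Mgen (h a) (h b) (h k))"
  hence i: "i < 6" and j: "j < 6" by (auto simp: Mgen_def)
  let ?L = "[[0,0,-(k*b),-a,0,0],[0,0,-a,-b,0,0],[0,1,a,-b,0,0],[1,0,-(k*b),a,0,0],[0,0,0,0,a,b],[0,0,0,0,k*b,a]]"
  have len: "\<forall>r\<in>set ?L. length r = 6" by (simp only: list.set insert_iff empty_iff list.size) simp
  have "?L ! i \<in> set ?L" using i by (intro nth_mem) simp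
  hence li: "length (?L ! i) = 6" using len by blast
  have gen: "\<And>L. i < length L \<Longrightarrow> j < length (L ! i) \<Longrightarrow> map (map h) L ! i ! j = h (L ! i ! j)"
    by simp
  have "map (map h) ?L ! i ! j = h (?L ! i ! j)"
    apply (rule gen)
    subgoal using i by simp
    subgoal using j li by simp
    done
  hence "h (?L ! i ! j) = map (map h) ?L ! i ! j" by simp
  also have "map (map h) ?L = [[0,0,-(h k*h b),-h a,0,0],[0,0,-h a,-h b,0,0],[0,1,h a,-h b,0,0],[1,0,-(h k*h b),h a,0,0],[0,0,0,0,h a,h b],[0,0,0,0,h k*h b,h a]]"
    by (simp add: h0 h1 hm hx)
  finally show "map_mat h (Mgen a b k) $$ (i, j) = Mgen (h a) (h b) (h k) $$ (i, j)"
    using i j by (simp add: Mgen_def)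
qed (auto simp: Mgen_def)

theorem proposition3p2:
  fixes k :: nat
  assumes "k > 1" and "squarefree k"
  shows "\<exists>A. nk_automorphism k A \<and> anosov A \<and> signature A = {2, 4}"
proof -
  obtain a b :: int where a: "a > 0" and b: "b > 0" and pell: "a^2 - int k * b^2 = 1"
    using pell_exists[OF assms] by blast
  define M where "M = Mgen a b (int k)"
  define A where "A = map_mat (of_int :: int \<Rightarrow> rat) M"
  have Mc: "M \<in> carrier_mat 6 6" unfolding M_def Mgen_def by simp
  have Ac: "A \<in> carrier_mat 6 6" unfolding A_def using Mc by simp
  have AM: "A = Mgen (of_int a) (of_int b) (of_nat k)"
    unfolding A_def M_def by (subst map_Mgen) auto
  have k0: "k \<noteq> 0" using assms(1) by simp
  have detA: "det A = 1"
  proof -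
    have "det A = ((of_int a)^2 - of_nat k * (of_int b)^2)^2"
      unfolding AM using a b k0 by (intro det_Mgen) auto
    also have "(of_int a)^2 - of_nat k * (of_int b)^2 = (of_int (a^2 - int k * b^2) :: rat)" by simp
    finally show ?thesis using pell by simp
  qed
  have aut: "nk_automorphism k A"
    unfolding nk_automorphism_def using Ac detA aut_Mgen[where a = "of_int a" and b = "of_int b" and k = k]
    unfolding AM by auto
  have cpA: "char_poly A = map_poly of_int (char_poly M)"
    unfolding A_def using of_int_hom.char_poly_hom[OF Mc] by simp
  have il: "integer_like A"
    unfolding integer_like_def cpA using detA by (simp add: coeff_map_poly)
  have cA: "cmat A = Mgen (of_int a) (of_int b) (of_nat k)"
    unfolding cmat_def AM by (subst map_Mgen) (auto simp: of_rat_mult of_rat_minus)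
  obtain rs :: "complex list" where rs: "Tgen (of_int a) (of_int b) (of_nat k) = linprod rs"
     "length (filter (\<lambda>z. cmod z < 1) rs) = 2" "length (filter (\<lambda>z. cmod z > 1) rs) = 4"
     "\<forall>z\<in>set rs. cmod z \<noteq> 1"
    using roots_setup[OF assms(1) a b pell] by blast
  have cpC: "char_poly (cmat A) = linprod rs"
    unfolding cA rs(1)[symmetric] using a b k0 by (intro char_poly_Mgen) auto
  have cAc: "cmat A \<in> carrier_mat 6 6" unfolding cA Mgen_def by simp
  have eig: "eigenvalue (cmat A) z \<longleftrightarrow> z \<in> set rs" for z
    using eigenvalue_root_char_poly[OF cAc] cpC poly_linprod by simp
  have hyp: "hyperbolic A" unfolding hyperbolic_def eig using rs(4) by blast
  have cnt: "(\<Sum>z\<in>{z. eigenvalue (cmat A) z \<and> R z}. order z (char_poly (cmat A))) = length (filter R rs)" for R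
  proof -
    have "{z. eigenvalue (cmat A) z \<and> R z} = {z \<in> set rs. R z}" using eig by auto
    thus ?thesis unfolding cpC order_linprod by (simp add: sum_count_list)
  qed
  have "num_eig_lt1 A = 2" unfolding num_eig_lt1_def cnt rs(2) ..
  moreover have "num_eig_gt1 A = 4" unfolding num_eig_gt1_def cnt rs(3) ..
  ultimately have "signature A = {2, 4}" unfolding signature_def by simp
  with aut hyp il show ?thesis unfolding anosov_def by blast
qed

end
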